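(* Let $\pi\in S_n$ be a cycle of length $l\ge2$ (with the remaining $n-l$ points fixed). Then $$\det(S_\pi)=\begin{cases}-1,& l=2,\\ 2,& l \text{ odd},\\ -4,& l=4k+2\text{ for some integer }k\ge1,\\ 0,& l=4k\text{ for some integer }k\ge1.\end{cases}$$
   Context: For $\theta\in S_n$, $S_\theta$ is the $n\times n$ symmetric $0/1$ matrix with $(S_\theta)_{ij}=1$ if $\theta(i)=j$ or $\theta^{-1}(i)=j$, and $0$ otherwise. *)

theory Defs
  imports "HOL-Analysis.Analysis" "HOL-Combinatorics.Cycles"
begin

definition S_mat :: "('n::finite \<Rightarrow> 'n) \<Rightarrow> real^'n^'n" where
  "S_mat \<theta> = (\<chi> i j. if \<theta> i = j \<or> inv \<theta> i = j then 1 else 0)"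

end

theory Submission
  imports Defs
begin


lemma sign_cycle: "distinct cs \<Longrightarrow> cs \<noteq> [] \<Longrightarrow> sign (cycle_of_list cs) = (-1)^(length cs - 1)"
proof (induction cs rule: cycle_of_list.induct)
  case (1 i j cs)
  have "sign (cycle_of_list (i#j#cs)) = sign (Transposition.transpose i j) * sign (cycle_of_list (j#cs))"
    by (simp add: sign_compose permutation_swap_id permutation_of_cycle)
  also have "\<dots> = - sign (cycle_of_list (j#cs))" using 1 by (simp add: sign_swap_id)
  also have "\<dots> = (-1)^(length (i#j#cs) - 1)" using 1 by simp
  finally show ?case .
qed auto

fun pm :: "'a list \<Rightarrow> 'a \<Rightarrow> 'a" where
  "pm (a#b#xs) = Transposition.transpose a b \<circ> pm xs" | "pm _ = id"

lemma pm_perm: "permutation (pm xs)"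
proof (induction xs rule: pm.induct)
  case (1 a b xs) show ?case unfolding pm.simps by (rule permutation_compose[OF permutation_swap_id 1])
qed auto

lemma pm_out: "x \<notin> set xs \<Longrightarrow> pm xs x = x"
  by (induction xs rule: pm.induct) auto

lemma sign_pm: "distinct xs \<Longrightarrow> sign (pm xs) = (-1)^(length xs div 2)"
proof (induction xs rule: pm.induct)
  case (1 a b xs)
  have "sign (pm (a#b#xs)) = sign (Transposition.transpose a b) * sign (pm xs)"
    by (simp add: sign_compose permutation_swap_id pm_perm)
  also have "\<dots> = - sign (pm xs)" using 1 by (simp add: sign_swap_id)
  also have "\<dots> = (-1)^(length (a#b#xs) div 2)" using 1 by simp
  finally show ?case .
qed auto

lemma pm_nth: "distinct xs \<Longrightarrow> even (length xs) \<Longrightarrow> i < length xs \<Longrightarrow>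
   pm xs (xs!i) = xs!(if even i then Suc i else i - 1)"
proof (induction xs arbitrary: i rule: pm.induct)
  case (1 a b xs)
  show ?case
  proof (cases "i \<le> 1")
    case True
    then consider "i = 0" | "i = 1" by linarith
    then show ?thesis using 1 by cases (auto simp: pm_out)
  next
    case False
    then obtain j where j: "i = Suc (Suc j)" by (metis One_nat_def Suc_pred less_Suc0 not_le not_less_eq)
    have jl: "j < length xs" using 1 j by simp
    have IH: "pm xs (xs!j) = xs!(if even j then Suc j else j - 1)" using 1 jl by simp
    have evx: "even (length xs)" using 1(3) by simp
    have "even j \<Longrightarrow> Suc j < length xs" using jl evx by presburger
    then have "xs!(if even j then Suc j else j - 1) \<in> set xs" using jl by (auto intro!: nth_mem)
    moreover have "a \<notin> set xs" "b \<notin> set xs" using 1 by auto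
    ultimately have "pm (a#b#xs) ((a#b#xs)!i) = xs!(if even j then Suc j else j - 1)"
      using IH j by (auto simp: transpose_eq_iff)
    then show ?thesis using j False by (cases j) auto
  qed
qed auto



theorem mainTheorem12:
  fixes \<pi> :: "'n::finite \<Rightarrow> 'n" and cs :: "'n list" and l :: nat
  assumes "distinct cs" and "length cs = l" and "l \<ge> 2"
    and "\<pi> = cycle_of_list cs"
  shows "(l = 2 \<longrightarrow> det (S_mat \<pi>) = -1)
       \<and> (odd l \<longrightarrow> det (S_mat \<pi>) = 2)
       \<and> ((\<exists>k::nat. k \<ge> 1 \<and> l = 4*k + 2) \<longrightarrow> det (S_mat \<pi>) = -4)
       \<and> ((\<exists>k::nat. k \<ge> 1 \<and> l = 4*k) \<longrightarrow> det (S_mat \<pi>) = 0)"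
proof -
  have l0: "0 < l" using assms by simp
  have cne: "cs \<noteq> []" using assms by auto
  have signpi: "sign \<pi> = (-1)^(l-1)" using sign_cycle[OF assms(1) cne] assms(2,4) by simp
  define c where "c k = cs ! (k mod l)" for k
  have cinj: "c a = c b \<longleftrightarrow> a mod l = b mod l" for a b
    unfolding c_def using assms(1,2) l0 by (simp add: nth_eq_iff_index_eq)
  have cin: "c k \<in> set cs" for k unfolding c_def using assms(2) l0 by simp
  have cover: "\<exists>k<l. x = c k" if "x \<in> set cs" for x
    unfolding c_def using that assms(2) by (metis in_set_conv_nth mod_less)
  have csc: "cs ! k = c k" if "k < l" for k unfolding c_def using that by simp
  have perm: "permutation \<pi>" using assms(4) permutation_of_cycle by simp
  have bijp: "bij \<pi>" using permutation_bijective[OF perm] .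
  have pic: "\<pi> (c k) = c (Suc k)" for k
  proof -
    have "map \<pi> cs = rotate1 cs" using cyclic_rotation[OF assms(1), of 1] assms(4) by simp
    then have "\<pi> (cs ! (k mod l)) = rotate1 cs ! (k mod l)"
      using l0 assms(2) by (metis length_map mod_less_divisor nth_map)
    also have "\<dots> = cs ! (Suc (k mod l) mod l)" using l0 assms(2) by (simp add: nth_rotate1)
    also have "\<dots> = c (Suc k)" unfolding c_def by (simp add: mod_Suc_eq)
    finally show ?thesis unfolding c_def .
  qed
  have ipic: "inv \<pi> (c (Suc k)) = c k" for k
    using pic bijp by (metis bij_inv_eq_iff)
  have ipic2: "inv \<pi> (c k) = c (k + l - 1)" for k
  proof -
    have "c k = c (Suc (k + l - 1))" using cinj l0 by simp
    then show ?thesis using ipic by simp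
  qed
  have piperm: "\<pi> permutes set cs" using assms(4) cycle_permutes by simp
  have out: "\<pi> x = x" "inv \<pi> x = x" if "x \<notin> set cs" for x
    using that piperm permutes_inv[OF piperm] by (auto simp: permutes_not_in)
  define G where "G = {p. p permutes (UNIV::'n set) \<and> (\<forall>i. p i = \<pi> i \<or> p i = inv \<pi> i)}"
  have detG: "det (S_mat \<pi>) = (\<Sum>p\<in>G. of_int (sign p))"
  proof -
    have "det (S_mat \<pi>) = (\<Sum>p\<in>{p. p permutes (UNIV::'n set)}. of_int (sign p) * (\<Prod>i\<in>UNIV. S_mat \<pi> $ i $ p i))"
      unfolding det_def ..
    also have "\<dots> = (\<Sum>p\<in>G. of_int (sign p) * (\<Prod>i\<in>UNIV. S_mat \<pi> $ i $ p i))"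
    proof (rule sum.mono_neutral_right)
      show "finite {p. p permutes (UNIV::'n set)}" by (simp add: finite_permutations)
      show "G \<subseteq> {p. p permutes UNIV}" unfolding G_def by auto
      show "\<forall>p\<in>{p. p permutes UNIV} - G. of_int (sign p) * (\<Prod>i\<in>UNIV. S_mat \<pi> $ i $ p i) = 0"
      proof
        fix p assume "p \<in> {p. p permutes (UNIV::'n set)} - G"
        then obtain i where "p i \<noteq> \<pi> i" "p i \<noteq> inv \<pi> i" unfolding G_def by auto
        then have "S_mat \<pi> $ i $ p i = 0" unfolding S_mat_def by auto
        then have "(\<Prod>i\<in>UNIV. S_mat \<pi> $ i $ p i) = 0" by (intro prod_zero) auto
        then show "of_int (sign p) * (\<Prod>i\<in>UNIV. S_mat \<pi> $ i $ p i) = 0" by simp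
      qed
    qed
    also have "\<dots> = (\<Sum>p\<in>G. of_int (sign p))"
    proof (rule sum.cong)
      fix p assume "p \<in> G"
      then have h: "p i = \<pi> i \<or> p i = inv \<pi> i" for i unfolding G_def by blast
      have "S_mat \<pi> $ i $ p i = 1" for i using h[of i] by (cases "p i = \<pi> i") (auto simp: S_mat_def)
      then have "\<forall>i\<in>UNIV. S_mat \<pi> $ i $ p i = 1" by simp
      then show "of_int (sign p) * (\<Prod>i\<in>UNIV. S_mat \<pi> $ i $ p i) = of_int (sign p)"
        by (simp add: prod.neutral)
    qed simp
    finally show ?thesis .
  qed
  define F where "F p k \<longleftrightarrow> p (c k) = c (Suc k)" for p :: "'n \<Rightarrow> 'n" and k
  have Gmem: "p i = \<pi> i \<or> p i = inv \<pi> i" if "p \<in> G" for p i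
    using that unfolding G_def by blast
  have Gor: "p (c k) = c (Suc k) \<or> p (c k) = c (k + l - 1)" if "p \<in> G" for p k
    using Gmem[OF that, of "c k"] pic ipic2 by simp
  have Gout: "p x = x" if "p \<in> G" "x \<notin> set cs" for p x
    using Gmem[OF that(1), of x] out[OF that(2)] by auto
  have Gdet: "p = q" if "p \<in> G" "q \<in> G" "\<And>k. k < l \<Longrightarrow> F p k = F q k" for p q
  proof
    fix x show "p x = q x"
    proof (cases "x \<in> set cs")
      case True
      then obtain k where k: "k < l" "x = c k" using cover by blast
      have "F p k = F q k" using that(3)[OF k(1)] .
      then show ?thesis using Gor[OF that(1), of k] Gor[OF that(2), of k] k
        unfolding F_def by auto
    next
      case False then show ?thesis using Gout[OF that(1) False] Gout[OF that(2) False] by simp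
    qed
  qed
  have Fmod: "F p a = F p b" if "a mod l = b mod l" for p a b
  proof -
    have "c a = c b" using cinj that by simp
    moreover have "Suc a mod l = Suc b mod l" using that mod_Suc_eq by metis
    then have "c (Suc a) = c (Suc b)" using cinj by simp
    ultimately show ?thesis unfolding F_def by simp
  qed
  have l2: "l = 2 \<Longrightarrow> det (S_mat \<pi>) = -1"
  proof -
    assume L: "l = 2"
    have ip: "inv \<pi> x = \<pi> x" for x
    proof (cases "x \<in> set cs")
      case True
      then obtain k where k: "x = c k" using cover by blast
      have "c (k + l - 1) = c (Suc k)" using L by simp
      then show ?thesis using k pic ipic2 by simp
    qed (use out in auto)
    have "\<pi> permutes UNIV" using permutes_subset[OF piperm] by simp
    then have "G = {\<pi>}" unfolding G_def using ip by auto
    moreover have "sign \<pi> = -1" using signpi L by simp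
    ultimately show ?thesis using detG by simp
  qed
  have piG: "\<pi> \<in> G" unfolding G_def using permutes_subset[OF piperm] by auto
  have ipiG: "inv \<pi> \<in> G" unfolding G_def using permutes_inv[OF permutes_subset[OF piperm]] by auto
  have Fpi: "F \<pi> k" for k unfolding F_def using pic by simp
  have ne: "c (Suc k) \<noteq> c (k + l - 1)" if L3: "l \<ge> 3" for k
  proof
    assume "c (Suc k) = c (k + l - 1)"
    then have "(k + l - 1) mod l = Suc k mod l" using cinj by simp
    then have "l dvd (k + l - 1 - Suc k)" using L3 by (subst mod_eq_dvd_iff_nat[symmetric]) auto
    moreover have "k + l - 1 - Suc k = l - 2" using L3 by simp
    ultimately have "l dvd l - 2" by simp
    then show False using dvd_imp_le[of l "l-2"] L3 by simp
  qed
  have nFipi: "\<not> F (inv \<pi>) k" if "l \<ge> 3" for k unfolding F_def using ipic2 ne[OF that] by (metis (no_types))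
  have step: "F p (k + 2)" if L3: "l \<ge> 3" and pG: "p \<in> G" and Fk: "F p k" for p k
  proof (rule ccontr)
    assume "\<not> F p (k + 2)"
    then have "p (c (k+2)) = c (k + 2 + l - 1)" using Gor[OF pG, of "k+2"] unfolding F_def by auto
    also have "\<dots> = c (Suc k + l)" by simp
    also have "\<dots> = c (Suc k)" unfolding cinj by (simp only: mod_add_self2)
    also have "\<dots> = p (c k)" using Fk unfolding F_def by simp
    finally have "c (k+2) = c k"
      using permutes_inj[of p UNIV] pG unfolding G_def inj_def by blast
    then have "(k+2) mod l = k mod l" using cinj by simp
    then have "l dvd 2" by (subst (asm) mod_eq_dvd_iff_nat) auto
    then show False using dvd_imp_le[of l 2] L3 by simp
  qed
  have stepj: "F p (k + 2*j)" if L3: "l \<ge> 3" and pG: "p \<in> G" and Fk: "F p k" for p k j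
  proof (induction j)
    case (Suc j)
    then show ?case using step[OF L3 pG, of "k + 2*j"] by (simp add: add.assoc)
  qed (use Fk in simp)
  have transodd: "F p m" if L3: "l \<ge> 3" and O: "odd l" and pG: "p \<in> G" and Fk: "F p k" for p k m
  proof -
    obtain h where h: "l = 2*h+1" using O oddE by blast
    define j where "j = (h+1)*(m + 2*h*k)"
    have "k + 2*j = m + l*(m + 2*h*k + k)" unfolding j_def h by (simp add: algebra_simps)
    then have "(k + 2*j) mod l = m mod l" by simp
    then show ?thesis using stepj[OF L3 pG Fk, of j] Fmod by blast
  qed
  have transeven: "F p m" if L3: "l \<ge> 3" and E: "even l" and pG: "p \<in> G" and Fk: "F p k"
     and E2: "even (m + k)" for p k m
  proof -
    obtain h where h: "l = 2*h" using E by blast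
    then obtain h' where h': "l = 2*Suc h'" using L3 by (cases h) auto
    obtain t where t: "m + k = 2*t" using E2 by blast
    define j where "j = t + h'*k"
    have "k + 2*j = k + 2*t + 2*h'*k" unfolding j_def by (simp add: algebra_simps)
    also have "\<dots> = m + l*k" unfolding h' t[symmetric] by (simp add: algebra_simps)
    finally have "k + 2*j = m + l*k" .
    then have "(k + 2*j) mod l = m mod l" by simp
    then show ?thesis using stepj[OF L3 pG Fk, of j] Fmod by blast
  qed
  have odd_case: "det (S_mat \<pi>) = 2" if L3: "l \<ge> 3" and O: "odd l"
  proof -
    have "G = {\<pi>, inv \<pi>}"
    proof
      show "{\<pi>, inv \<pi>} \<subseteq> G" using piG ipiG by simp
      show "G \<subseteq> {\<pi>, inv \<pi>}"
      proof
        fix p assume pG: "p \<in> G"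
        show "p \<in> {\<pi>, inv \<pi>}"
        proof (cases "F p 0")
          case True
          then have "p = \<pi>" using Gdet[OF pG piG] transodd[OF L3 O pG True] Fpi by simp
          then show ?thesis by simp
        next
          case False
          have "\<not> F p k" for k using transodd[OF L3 O pG, of k 0] False by blast
          then have "p = inv \<pi>" using Gdet[OF pG ipiG] nFipi[OF L3] by simp
          then show ?thesis by simp
        qed
      qed
    qed
    moreover have "\<pi> \<noteq> inv \<pi>" using Fpi[of 0] nFipi[OF L3, of 0] by auto
    moreover have "sign (inv \<pi>) = sign \<pi>" using sign_inverse[OF perm] .
    moreover have "sign \<pi> = 1"
    proof -
      obtain h where h: "l = 2*h+1" using O oddE by blast
      then show ?thesis using signpi by simp
    qed
    ultimately show ?thesis using detG by simp
  qed
  have even_case: "det (S_mat \<pi>) = -2 + 2*(-1)^(l div 2)" if L3: "l \<ge> 3" and E: "even l"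
  proof -
    have L4: "l \<ge> 4" using L3 E by presburger
    define m1 where "m1 = pm cs"
    define r where "r = rotate1 cs"
    define m2 where "m2 = pm r"
    have rd: "distinct r" "length r = l" "set r = set cs" using assms unfolding r_def by auto
    have rnth: "r ! i = c (Suc i)" if "i < l" for i
      using that assms(2) unfolding r_def c_def by (simp add: nth_rotate1)
    have Gpm: "pm xs \<in> G" if xsd: "distinct xs" and xsl: "length xs = l" and xss: "set xs = set cs" and
         nthc: "\<And>i. i < l \<Longrightarrow> (pm xs (xs!i) = \<pi> (xs!i) \<or> pm xs (xs!i) = inv \<pi> (xs!i))" for xs
    proof -
      have "pm xs permutes UNIV"
        using bij_imp_permutes[of "pm xs" UNIV] permutation_bijective[OF pm_perm[of xs]] by simp
      moreover have "pm xs x = \<pi> x \<or> pm xs x = inv \<pi> x" for x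
      proof (cases "x \<in> set xs")
        case True then obtain i where "i < l" "x = xs!i" using xsl by (metis in_set_conv_nth)
        then show ?thesis using nthc by simp
      next
        case False then show ?thesis using pm_out[OF False] out xss by simp
      qed
      ultimately show ?thesis unfolding G_def by auto
    qed
    have m1G: "m1 \<in> G" unfolding m1_def
    proof (rule Gpm[OF assms(1,2) refl])
      fix i assume i: "i < l"
      show "pm cs (cs!i) = \<pi> (cs!i) \<or> pm cs (cs!i) = inv \<pi> (cs!i)"
      proof (cases "even i")
        case True
        then have si: "Suc i < l" using i E by presburger
        have "pm cs (cs!i) = cs ! Suc i" using pm_nth[of cs i] assms(1,2) E i True by simp
        then show ?thesis using csc[OF si] csc[OF i] pic by simp
      next
        case False
        then have i1: "i \<ge> 1" by presburger
        have "i + l - 1 = (i - 1) + l" using i1 by simp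
        then have cc: "c (i - 1) = c (i + l - 1)" unfolding cinj by (simp only: mod_add_self2)
        have "pm cs (cs!i) = cs ! (i - 1)" using pm_nth[of cs i] assms(1,2) E i False by simp
        then show ?thesis using csc[of "i-1"] csc[OF i] ipic2 cc i by simp
      qed
    qed
    have m2G: "m2 \<in> G" unfolding m2_def
    proof (rule Gpm[OF rd])
      fix i assume i: "i < l"
      show "pm r (r!i) = \<pi> (r!i) \<or> pm r (r!i) = inv \<pi> (r!i)"
      proof (cases "even i")
        case True
        then have si: "Suc i < l" using i E by presburger
        have "pm r (r!i) = r ! Suc i" using pm_nth[of r i] rd E i True by simp
        then show ?thesis using rnth[OF si] rnth[OF i] pic by simp
      next
        case False
        then have i1: "i \<ge> 1" by presburger
        have "pm r (r!i) = r ! (i - 1)" using pm_nth[of r i] rd E i False by simp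
        then show ?thesis using rnth[of "i-1"] rnth[OF i] ipic i i1 by simp
      qed
    qed
    have c02: "c 0 \<noteq> c 2" unfolding cinj using L4 by simp
    have c1: "c (l - 1) \<noteq> c 1" unfolding cinj using L4 by simp
    have Fm1_0: "F m1 0"
      using pm_nth[of cs 0] assms(1,2) E l0 csc[of 0] csc[of 1] L4 unfolding F_def m1_def by simp
    have Fm1_1: "\<not> F m1 1"
      using pm_nth[of cs 1] assms(1,2) E L4 csc[of 0] csc[of 1] c02 unfolding F_def m1_def
      by (simp add: numeral_2_eq_2)
    have r0: "r ! (l - 1) = c 0"
    proof -
      have "r ! (l - 1) = c (Suc (l - 1))" using rnth l0 by simp
      also have "\<dots> = c 0" unfolding cinj using l0 by simp
      finally show ?thesis .
    qed
    have Fm2_0: "\<not> F m2 0"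
    proof -
      have "odd (l - 1)" using E l0 by presburger
      then have "m2 (r ! (l - 1)) = r ! (l - 1 - 1)" using pm_nth[of r "l-1"] rd E l0 unfolding m2_def by simp
      also have "\<dots> = c (Suc (l - 1 - 1))" using rnth[of "l-1-1"] L4 by simp
      also have "Suc (l - 1 - 1) = l - 1" using L4 by simp
      finally have "m2 (r ! (l - 1)) = c (l - 1)" .
      then show ?thesis using r0 c1 unfolding F_def by simp
    qed
    have Fm2_1: "F m2 1"
    proof -
      have "m2 (r ! 0) = r ! 1" using pm_nth[of r 0] rd E l0 unfolding m2_def by simp
      then show ?thesis using rnth[of 0] rnth[of 1] L4 unfolding F_def by (simp add: numeral_2_eq_2)
    qed
    have Fpar: "F p k = F p (k mod 2)" if pG: "p \<in> G" for p k
    proof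
      assume "F p k" then show "F p (k mod 2)" by (rule transeven[OF L3 E pG]) presburger
    next
      assume "F p (k mod 2)" then show "F p k" by (rule transeven[OF L3 E pG]) presburger
    qed
    have det2: "p = q" if pG: "p \<in> G" and qG: "q \<in> G" and "F p 0 = F q 0" "F p 1 = F q 1" for p q
    proof (rule Gdet[OF pG qG])
      fix k
      have "k mod 2 = 0 \<or> k mod 2 = (1::nat)" by presburger
      then show "F p k = F q k" using Fpar[OF pG, of k] Fpar[OF qG, of k] that(3,4) by auto
    qed
    have "G = {\<pi>, inv \<pi>, m1, m2}"
    proof
      show "{\<pi>, inv \<pi>, m1, m2} \<subseteq> G" using piG ipiG m1G m2G by simp
      show "G \<subseteq> {\<pi>, inv \<pi>, m1, m2}"
      proof
        fix p assume pG: "p \<in> G"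
        consider "F p 0" "F p 1" | "\<not> F p 0" "\<not> F p 1" | "F p 0" "\<not> F p 1" | "\<not> F p 0" "F p 1"
          by blast
        then show "p \<in> {\<pi>, inv \<pi>, m1, m2}"
        proof cases
          case 1 then have "p = \<pi>" using det2[OF pG piG] Fpi by simp
          then show ?thesis by simp
        next
          case 2 then have "p = inv \<pi>" using det2[OF pG ipiG] nFipi[OF L3] by simp
          then show ?thesis by simp
        next
          case 3 then have "p = m1" using det2[OF pG m1G] Fm1_0 Fm1_1 by simp
          then show ?thesis by simp
        next
          case 4 then have "p = m2" using det2[OF pG m2G] Fm2_0 Fm2_1 by simp
          then show ?thesis by simp
        qed
      qed
    qed
    moreover have "\<pi> \<noteq> inv \<pi>" using Fpi[of 0] nFipi[OF L3, of 0] by auto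
    moreover have "\<pi> \<noteq> m1" using Fpi[of 1] Fm1_1 by auto
    moreover have "\<pi> \<noteq> m2" using Fpi[of 0] Fm2_0 by auto
    moreover have "inv \<pi> \<noteq> m1" using nFipi[OF L3, of 0] Fm1_0 by auto
    moreover have "inv \<pi> \<noteq> m2" using nFipi[OF L3, of 1] Fm2_1 by auto
    moreover have "m1 \<noteq> m2" using Fm1_0 Fm2_0 by auto
    moreover have "sign (inv \<pi>) = sign \<pi>" using sign_inverse[OF perm] .
    moreover have "sign \<pi> = -1"
    proof -
      obtain h where h: "l = 2*h" using E by blast
      then have "l - 1 = 2*(h-1) + 1" using L4 by simp
      then show ?thesis using signpi by simp
    qed
    moreover have "sign m1 = (-1)^(l div 2)" unfolding m1_def using sign_pm[OF assms(1)] assms(2) by simp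
    moreover have "sign m2 = (-1)^(l div 2)" unfolding m2_def using sign_pm[OF rd(1)] rd(2) by simp
    ultimately show ?thesis using detG by simp
  qed
  show ?thesis
  proof (intro conjI impI)
    assume "l = 2" then show "det (S_mat \<pi>) = -1" by (rule l2)
  next
    assume O: "odd l"
    then have "l \<ge> 3" using assms(3) by presburger
    then show "det (S_mat \<pi>) = 2" using odd_case O by simp
  next
    assume "\<exists>k::nat. k \<ge> 1 \<and> l = 4*k + 2"
    then obtain k where k: "k \<ge> 1" "l = 4*k+2" by blast
    then have "l \<ge> 3" "even l" "l div 2 = 2*k+1" by presburger+
    then show "det (S_mat \<pi>) = -4" using even_case by simp
  next
    assume "\<exists>k::nat. k \<ge> 1 \<and> l = 4*k"
    then obtain k where k: "k \<ge> 1" "l = 4*k" by blast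
    then have "l \<ge> 3" "even l" "l div 2 = 2*k" by presburger+
    then show "det (S_mat \<pi>) = 0" using even_case by simp
  qed
qed

end
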